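(* For any $\boldsymbol{x},\boldsymbol{x}^\star\in\mathbb{T}^3$ there exist $N\in\mathbb{N}$ and $\underline{\omega}^N=(\omega_1,\dots,\omega_N)\in\Omega_0^N$ such that $f_{\underline{\omega}^N}(\boldsymbol{x})=\boldsymbol{x}^\star$; that is, the one-point process is exactly controllable.
   Context: $\mathbb{T}^3=\mathbb{R}^3/(2\pi\mathbb{Z})^3$ with points $\boldsymbol{x}=(x,y,z)$. Fix $U>0$ and let $\Omega_0=[-U,U]^3\times[0,2\pi)^3$, with elements $\omega=(\mathsf{A},\mathsf{B},\mathsf{C},\alpha,\beta,\gamma)$. Define maps of $\mathbb{T}^3$: $f_{(\mathsf{A},\alpha)}(x,y,z)=(x+\mathsf{A}\sin(z+\alpha),\ y+\mathsf{A}\cos(z+\alpha),\ z)$, $f_{(\mathsf{B},\beta)}(x,y,z)=(x,\ y+\mathsf{B}\sin(x+\beta),\ z+\mathsf{B}\cos(x+\beta))$, $f_{(\mathsf{C},\gamma)}(x,y,z)=(x+\mathsf{C}\cos(y+\gamma),\ y,\ z+\mathsf{C}\sin(y+\gamma))$, and $f_\omega=f_{(\mathsf{C},\gamma)}\circ f_{(\mathsf{B},\beta)}\circ f_{(\mathsf{A},\alpha)}$. For $\underline{\omega}^N=(\omega_1,\dots,\omega_N)\in\Omega_0^N$, $f_{\underline{\omega}^N}=f_{\omega_N}\circ\cdots\circ f_{\omega_1}$. *)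

theory Defs
  imports Complex_Main
begin

text \<open>Points of the torus T^3 = R^3/(2 pi Z)^3 are represented by real triples;
  equality on the torus is componentwise congruence modulo 2 pi.\<close>

type_synonym pt = "real \<times> real \<times> real"

definition cong2pi :: "real \<Rightarrow> real \<Rightarrow> bool" where
  "cong2pi a b \<longleftrightarrow> (\<exists>k::int. a - b = 2 * pi * of_int k)"

definition torus_eq :: "pt \<Rightarrow> pt \<Rightarrow> bool" where
  "torus_eq p q \<longleftrightarrow> cong2pi (fst p) (fst q) \<and> cong2pi (fst (snd p)) (fst (snd q))
                    \<and> cong2pi (snd (snd p)) (snd (snd q))"

definition fA :: "real \<Rightarrow> real \<Rightarrow> pt \<Rightarrow> pt" where
  "fA A \<alpha> p = (case p of (x, y, z) \<Rightarrow> (x + A * sin (z + \<alpha>), y + A * cos (z + \<alpha>), z))"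

definition fB :: "real \<Rightarrow> real \<Rightarrow> pt \<Rightarrow> pt" where
  "fB B \<beta> p = (case p of (x, y, z) \<Rightarrow> (x, y + B * sin (x + \<beta>), z + B * cos (x + \<beta>)))"

definition fC :: "real \<Rightarrow> real \<Rightarrow> pt \<Rightarrow> pt" where
  "fC C \<gamma> p = (case p of (x, y, z) \<Rightarrow> (x + C * cos (y + \<gamma>), y, z + C * sin (y + \<gamma>)))"

type_synonym omega = "real \<times> real \<times> real \<times> real \<times> real \<times> real"

definition f_omega :: "omega \<Rightarrow> pt \<Rightarrow> pt" where
  "f_omega w = (case w of (A, B, C, \<alpha>, \<beta>, \<gamma>) \<Rightarrow> fC C \<gamma> \<circ> fB B \<beta> \<circ> fA A \<alpha>)"

definition Omega0 :: "real \<Rightarrow> omega set" where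
  "Omega0 U = {(A, B, C, \<alpha>, \<beta>, \<gamma>). A \<in> {-U..U} \<and> B \<in> {-U..U} \<and> C \<in> {-U..U}
      \<and> \<alpha> \<in> {0..<2*pi} \<and> \<beta> \<in> {0..<2*pi} \<and> \<gamma> \<in> {0..<2*pi}}"

text \<open>For ws = [w_1, ..., w_N]: f_seq ws = f_{w_N} o ... o f_{w_1} (w_1 applied first).\<close>
definition f_seq :: "omega list \<Rightarrow> pt \<Rightarrow> pt" where
  "f_seq ws = fold f_omega ws"

end

theory Submission
  imports Defs
begin

definition ang :: "real \<Rightarrow> real" where
  "ang t = t - 2*pi*of_int (floor (t/(2*pi)))"

lemma ang_range: "ang t \<in> {0..<2*pi}"
proof -
  have p: "2*pi > 0" by simp
  have "of_int (floor (t/(2*pi))) \<le> t/(2*pi)" by simp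
  hence "2*pi*of_int (floor (t/(2*pi))) \<le> 2*pi*(t/(2*pi))" using p by (intro mult_left_mono) auto
  hence a: "2*pi*of_int (floor (t/(2*pi))) \<le> t" by simp
  have "t/(2*pi) < of_int (floor (t/(2*pi))) + 1" by linarith
  hence b: "t < 2*pi*of_int (floor (t/(2*pi))) + 2*pi" using p by (simp add: field_simps)
  show ?thesis using a b unfolding ang_def by auto
qed

lemma sin_ang: "sin (ang t) = sin t" and cos_ang: "cos (ang t) = cos t"
  unfolding ang_def by (simp_all add: sin_diff cos_diff)

definition wx :: "real \<Rightarrow> real \<Rightarrow> omega" where
  "wx z a = (a, 0, 0, ang (pi/2 - z), 0, 0)"
definition wy :: "real \<Rightarrow> real \<Rightarrow> omega" where
  "wy z a = (a, 0, 0, ang (- z), 0, 0)"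
definition wz :: "real \<Rightarrow> real \<Rightarrow> omega" where
  "wz x b = (0, b, 0, 0, ang (- x), 0)"

lemma ang_plus: "sin (z + ang (t - z)) = sin t" "cos (z + ang (t - z)) = cos t"
proof -
  have "z + ang (t - z) = t - 2*pi*of_int (floor ((t-z)/(2*pi)))" unfolding ang_def by simp
  thus "sin (z + ang (t - z)) = sin t" "cos (z + ang (t - z)) = cos t"
    by (simp_all add: sin_diff cos_diff)
qed

lemma wx_eval: "f_omega (wx z a) (x, y, z) = (x + a, y, z)"
proof -
  have "sin (z + ang (pi/2 - z)) = 1" "cos (z + ang (pi/2 - z)) = 0"
    using ang_plus[of z "pi/2"] by simp_all
  thus ?thesis unfolding wx_def f_omega_def fA_def fB_def fC_def by simp
qed

lemma wy_eval: "f_omega (wy z a) (x, y, z) = (x, y + a, z)"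
proof -
  have "sin (z + ang (- z)) = 0" "cos (z + ang (- z)) = 1"
    using ang_plus[of z 0] by simp_all
  thus ?thesis unfolding wy_def f_omega_def fA_def fB_def fC_def by simp
qed

lemma wz_eval: "f_omega (wz x b) (x, y, z) = (x, y, z + b)"
proof -
  have "sin (x + ang (- x)) = 0" "cos (x + ang (- x)) = 1"
    using ang_plus[of x 0] by simp_all
  thus ?thesis unfolding wz_def f_omega_def fA_def fB_def fC_def by simp
qed

lemma rep_x: "fold f_omega (replicate n (wx z a)) (x, y, z) = (x + real n * a, y, z)"
  by (induction n arbitrary: x) (simp_all add: wx_eval algebra_simps del: fold_replicate)
lemma rep_y: "fold f_omega (replicate n (wy z a)) (x, y, z) = (x, y + real n * a, z)"
  by (induction n arbitrary: y) (simp_all add: wy_eval algebra_simps del: fold_replicate)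
lemma rep_z: "fold f_omega (replicate n (wz x a)) (x, y, z) = (x, y, z + real n * a)"
  by (induction n arbitrary: z) (simp_all add: wz_eval algebra_simps del: fold_replicate)

lemma in_O: assumes "\<bar>a\<bar> \<le> U"
  shows "wx z a \<in> Omega0 U" "wy z a \<in> Omega0 U" "wz x a \<in> Omega0 U"
  using assms ang_range unfolding wx_def wy_def wz_def Omega0_def by auto

theorem lemma3p1:
  fixes U :: real and x xstar :: pt
  assumes "U > 0"
  shows "\<exists>ws::omega list. length ws \<ge> 1 \<and> set ws \<subseteq> Omega0 U
           \<and> torus_eq (f_seq ws x) xstar"
proof -
  obtain x1 y1 z1 where X: "x = (x1, y1, z1)" by (cases x) auto
  obtain x2 y2 z2 where XS: "xstar = (x2, y2, z2)" by (cases xstar) auto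
  define M where "M = \<bar>x2 - x1\<bar> + \<bar>y2 - y1\<bar> + \<bar>z2 - z1\<bar>"
  define n where "n = nat (ceiling (M / U)) + 1"
  have n1: "n \<ge> 1" unfolding n_def by simp
  have "M / U \<le> real n" unfolding n_def by linarith
  hence MU: "M \<le> real n * U" using assms by (simp add: field_simps)
  have np: "real n > 0" using n1 by simp
  have bnd: "\<bar>d / real n\<bar> \<le> U" if "\<bar>d\<bar> \<le> M" for d
  proof -
    have "\<bar>d\<bar> \<le> real n * U" using that MU by linarith
    thus ?thesis using np by (simp add: field_simps abs_divide)
  qed
  define ws where "ws = replicate n (wx z1 ((x2 - x1) / real n))
      @ replicate n (wy z1 ((y2 - y1) / real n)) @ replicate n (wz x2 ((z2 - z1) / real n))"
  have "set ws \<subseteq> Omega0 U"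
    unfolding ws_def using in_O bnd M_def by (auto intro!: in_O bnd simp: M_def)
  moreover have "length ws \<ge> 1" using n1 unfolding ws_def by simp
  moreover have "f_seq ws x = xstar"
    unfolding ws_def f_seq_def X XS using np
    by (simp only: fold_append comp_def rep_x rep_y) (simp del: fold_replicate add: rep_z)
  moreover have "torus_eq xstar xstar" unfolding torus_eq_def cong2pi_def
    by (auto intro: exI[of _ 0])
  ultimately show ?thesis by auto
qed

end
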